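(* Let $L$ be a positive integer, let $a,b$ be positive divisors of $L$, and set $M=L/b$. Let ${\mathbf g}\in\mathbb C^L$ be a window (indices modulo $L$) such that $$K_{\mathbf g}:=\min_{t=0,\dots,L-1}\Big(\sum_{k=0}^{b-1}|g[t+kM]|^2\Big)>0.$$ Let ${\mathbf N}$ be a real Gaussian white noise of length $L$ with variance $\sigma_0^2$, and let ${\mathbf Z}$ be a zero-mean complex Gaussian random signal of length $L$ independent of ${\mathbf N}$. Fix a time index $n$ and a real number $\delta$, and define the random vector ${\mathbf G}\in\mathbb C^M$ by $${\mathbf G}[m]=\sum_{t=0}^{L-1}Z_t\,\overline{g}[t-na]\,e^{-2i\pi[m-\delta][t-an]/M}+\mathcal G_{\mathbf N}[m,n],\qquad m=0,\dots,M-1,$$ where $\mathcal G_{\mathbf N}[m,n]=\sum_{t=0}^{L-1}N_t\,\overline{g}[t-na]\,e^{-2i\pi mb(t-na)/L}$. Let $C_{\mathbf G}[m,m']=\mathbb E\big[{\mathbf G}[m]\overline{{\mathbf G}[m']}\big]$ be its covariance matrix. Then for all ${\mathbf x}\in\mathbb C^M$, $${\mathbf x}^*C_{\mathbf G}{\mathbf x}\ge\sigma_0^2K_{\mathbf g}\,\|{\mathbf x}\|_2^2,$$ and hence $C_{\mathbf G}$ is boundedly invertible.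
   Context: Signals are finite of length $L$ with periodic boundary conditions (indices modulo $L$). A real Gaussian white noise with variance $\sigma_0^2$ is a vector of i.i.d. $\mathcal N(0,\sigma_0^2)$ entries. In the paper ${\mathbf Z}$ is the analytic signal of a stationary Gaussian signal and ${\mathbf G}$ is the frequency-shifted Gabor transform slice ${\mathbf G}^{(n;\delta)}$ used to approximate the Gabor transform of a frequency-modulated noisy signal. *)

theory Defs
  imports "HOL-Probability.Probability"
begin

definition per :: "nat \<Rightarrow> (nat \<Rightarrow> 'b) \<Rightarrow> int \<Rightarrow> 'b" where
  "per L g t = g (nat (t mod int L))"

definition Kg :: "nat \<Rightarrow> nat \<Rightarrow> (nat \<Rightarrow> complex) \<Rightarrow> real" where
  "Kg L b g = Min ((\<lambda>t. \<Sum>k<b. (cmod (per L g (int t + int k * int (L div b))))\<^sup>2) ` {..<L})"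

definition real_gaussian_rv :: "'a measure \<Rightarrow> ('a \<Rightarrow> real) \<Rightarrow> bool" where
  "real_gaussian_rv P X \<longleftrightarrow> X \<in> borel_measurable P \<and>
     ((\<exists>c. AE \<omega> in P. X \<omega> = c) \<or>
      (\<exists>\<mu> \<sigma>. \<sigma> > 0 \<and> distributed P lborel X (normal_density \<mu> \<sigma>)))"

text \<open>A complex random signal Z_0..Z_{L-1} is (jointly) Gaussian iff the real vector of its
  real and imaginary parts is jointly Gaussian, i.e. every real linear combination of them
  is a (possibly degenerate) Gaussian random variable.\<close>
definition complex_gaussian_signal :: "'a measure \<Rightarrow> nat \<Rightarrow> (nat \<Rightarrow> 'a \<Rightarrow> complex) \<Rightarrow> bool" where
  "complex_gaussian_signal P L Z \<longleftrightarrow>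
     (\<forall>t<L. Z t \<in> borel_measurable P) \<and>
     (\<forall>c d :: nat \<Rightarrow> real.
        real_gaussian_rv P (\<lambda>\<omega>. \<Sum>t<L. c t * Re (Z t \<omega>) + d t * Im (Z t \<omega>)))"

end

theory Submission
  imports Defs "Jordan_Normal_Form.Determinant"
begin



definition L2r :: "'a measure \<Rightarrow> ('a \<Rightarrow> real) \<Rightarrow> bool" where
  "L2r M f \<longleftrightarrow> f \<in> borel_measurable M \<and> integrable M (\<lambda>x. (f x)\<^sup>2)"

lemma abs_le_1_sq: "\<bar>y::real\<bar> \<le> 1 + y\<^sup>2"
proof -
  have "0 \<le> (\<bar>y\<bar> - 1)\<^sup>2" by simp
  then have "0 \<le> \<bar>y\<bar> * \<bar>y\<bar> - 2 * \<bar>y\<bar> + 1" by (simp add: power2_eq_square algebra_simps)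
  moreover have "\<bar>y\<bar> * \<bar>y\<bar> = y\<^sup>2" by (simp add: power2_eq_square abs_mult_self_eq)
  moreover have "0 \<le> y\<^sup>2" by simp
  ultimately show ?thesis by linarith
qed

lemma prod_le_sq: "\<bar>a*b::real\<bar> \<le> \<bar>a\<^sup>2 + b\<^sup>2\<bar>"
proof -
  have "2 * \<bar>a\<bar> * \<bar>b\<bar> \<le> \<bar>a\<bar>\<^sup>2 + \<bar>b\<bar>\<^sup>2" by (rule sum_squares_bound)
  then have "2 * \<bar>a\<bar> * \<bar>b\<bar> \<le> a\<^sup>2 + b\<^sup>2" by simp
  moreover have "\<bar>a\<^sup>2 + b\<^sup>2\<bar> = a\<^sup>2 + b\<^sup>2" by simp
  moreover have "\<bar>a*b\<bar> = \<bar>a\<bar> * \<bar>b\<bar>" by (simp add: abs_mult)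
  moreover have "0 \<le> \<bar>a\<bar> * \<bar>b\<bar>" by simp
  ultimately show ?thesis by linarith
qed

lemma L2r_integrable:
  assumes "prob_space M" "L2r M f" shows "integrable M f"
proof -
  interpret prob_space M by fact
  have "integrable M (\<lambda>x. 1 + (f x)\<^sup>2)" using assms(2) unfolding L2r_def by auto
  moreover have "f \<in> borel_measurable M" using assms(2) unfolding L2r_def by simp
  moreover have "AE x in M. norm (f x) \<le> norm (1 + (f x)\<^sup>2)"
    by (rule AE_I2) (simp add: abs_le_1_sq)
  ultimately show ?thesis by (rule Bochner_Integration.integrable_bound)
qed

lemma L2r_mult:
  assumes "L2r M f" "L2r M g" shows "integrable M (\<lambda>x. f x * g x)"
proof -
  have "integrable M (\<lambda>x. (f x)\<^sup>2 + (g x)\<^sup>2)" using assms unfolding L2r_def by auto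
  moreover have "(\<lambda>x. f x * g x) \<in> borel_measurable M" using assms unfolding L2r_def by (auto intro!: borel_measurable_times)
  moreover have "AE x in M. norm (f x * g x) \<le> norm ((f x)\<^sup>2 + (g x)\<^sup>2)"
    apply (rule AE_I2)
    using prod_le_sq by simp
  ultimately show ?thesis by (rule Bochner_Integration.integrable_bound)
qed

lemma L2r_add: assumes "L2r M f" "L2r M g" shows "L2r M (\<lambda>x. f x + g x)"
proof -
  have "integrable M (\<lambda>x. (f x)\<^sup>2 + (g x)\<^sup>2 + 2 * (f x * g x))"
    using assms L2r_mult[OF assms] unfolding L2r_def by auto
  then show ?thesis using assms unfolding L2r_def by (auto simp: power2_sum mult.assoc intro!: borel_measurable_add)
qed

lemma L2r_cmult: assumes "L2r M f" shows "L2r M (\<lambda>x. c * f x)"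
  using assms unfolding L2r_def by (auto simp: power_mult_distrib)

lemma L2r_sum: assumes "\<And>i. i \<in> I \<Longrightarrow> L2r M (f i)" "prob_space M" shows "L2r M (\<lambda>x. \<Sum>i\<in>I. f i x)"
  using assms(1)
proof (induction I rule: infinite_finite_induct)
  case (infinite A) then show ?case using assms(2) by (simp add: L2r_def prob_space.finite_measure finite_measure.integrable_const)
next
  case empty then show ?case using assms(2) by (simp add: L2r_def prob_space.finite_measure finite_measure.integrable_const)
next
  case (insert x F) then show ?case by (simp add: L2r_add)
qed

lemma gauss_L2r:
  assumes "prob_space M" "real_gaussian_rv M X" shows "L2r M X"
proof -
  interpret prob_space M by fact
  have m: "X \<in> borel_measurable M" using assms(2) unfolding real_gaussian_rv_def by auto
  from assms(2) consider c where "AE \<omega> in M. X \<omega> = c" | \<mu> \<sigma> where "\<sigma> > 0" "distributed M lborel X (normal_density \<mu> \<sigma>)"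
    unfolding real_gaussian_rv_def by auto
  then show ?thesis
  proof cases
    case 1
    have "integrable M (\<lambda>x. c\<^sup>2)" by simp
    moreover have "AE x in M. c\<^sup>2 = (X x)\<^sup>2" using 1 by auto
    moreover have "(\<lambda>x. (X x)\<^sup>2) \<in> borel_measurable M" using m by simp
    ultimately have "integrable M (\<lambda>x. (X x)\<^sup>2)"
      using integrable_cong_AE_imp[of M "\<lambda>x. c\<^sup>2" "\<lambda>x. (X x)\<^sup>2"] by blast
    then show ?thesis using m by (simp add: L2r_def)
  next
    case 2
    have e: "\<And>x. normal_density \<mu> \<sigma> x * x\<^sup>2 = normal_density \<mu> \<sigma> x * (x - \<mu>)^2 + 2 * \<mu> * (normal_density \<mu> \<sigma> x * (x - \<mu>)^1) + \<mu>\<^sup>2 * (normal_density \<mu> \<sigma> x * (x - \<mu>)^0)"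
      by (simp add: algebra_simps power2_eq_square)
    have "integrable lborel (\<lambda>x. normal_density \<mu> \<sigma> x * x\<^sup>2)"
    proof -
      have 1: "integrable lborel (\<lambda>x. normal_density \<mu> \<sigma> x * (x - \<mu>)^k)" for k
        by (rule integrable_normal_moment) (use 2(1) in simp)
      have 2: "integrable lborel (\<lambda>x. 2 * \<mu> * (normal_density \<mu> \<sigma> x * (x - \<mu>)^1))"
        using integrable_mult_right[OF 1[of 1], of "2*\<mu>"] .
      have 3: "integrable lborel (\<lambda>x. \<mu>\<^sup>2 * (normal_density \<mu> \<sigma> x * (x - \<mu>)^0))"
        using integrable_mult_right[OF 1[of 0], of "\<mu>\<^sup>2"] .
      show ?thesis unfolding e using Bochner_Integration.integrable_add[OF Bochner_Integration.integrable_add[OF 1[of 2] 2] 3] .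
    qed
    then have "integrable M (\<lambda>x. (X x)\<^sup>2)"
      using distributed_integrable[OF 2(2), of "\<lambda>x. x\<^sup>2"] by simp
    then show ?thesis using m by (simp add: L2r_def)
  qed
qed




definition L2c :: "'a measure \<Rightarrow> ('a \<Rightarrow> complex) \<Rightarrow> bool" where
  "L2c M f \<longleftrightarrow> L2r M (\<lambda>x. Re (f x)) \<and> L2r M (\<lambda>x. Im (f x))"

lemma L2r_zero: "prob_space M \<Longrightarrow> L2r M (\<lambda>x. 0)"
  by (simp add: L2r_def prob_space.finite_measure finite_measure.integrable_const)

lemma L2c_add: "L2c M f \<Longrightarrow> L2c M g \<Longrightarrow> L2c M (\<lambda>x. f x + g x)"
  unfolding L2c_def by (auto intro: L2r_add)

lemma L2c_cmult: assumes "L2c M f" shows "L2c M (\<lambda>x. c * f x)"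
proof -
  have 1: "L2r M (\<lambda>x. Re c * Re (f x) + (- Im c) * Im (f x))"
    using assms unfolding L2c_def by (intro L2r_add L2r_cmult) auto
  have 2: "L2r M (\<lambda>x. Re c * Im (f x) + Im c * Re (f x))"
    using assms unfolding L2c_def by (intro L2r_add L2r_cmult) auto
  have e1: "(\<lambda>x. Re (c * f x)) = (\<lambda>x. Re c * Re (f x) + (- Im c) * Im (f x))" by auto
  have e2: "(\<lambda>x. Im (c * f x)) = (\<lambda>x. Re c * Im (f x) + Im c * Re (f x))" by (auto simp: algebra_simps)
  show ?thesis unfolding L2c_def e1 e2 using 1 2 by simp
qed

lemma L2c_sum: assumes "\<And>i. i \<in> I \<Longrightarrow> L2c M (f i)" "prob_space M" shows "L2c M (\<lambda>x. \<Sum>i\<in>I. f i x)"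
  using assms unfolding L2c_def by (auto simp: Re_sum Im_sum intro!: L2r_sum)

lemma L2c_of_real: "prob_space M \<Longrightarrow> L2r M f \<Longrightarrow> L2c M (\<lambda>x. complex_of_real (f x))"
  unfolding L2c_def by (auto intro: L2r_zero)

lemma complex_integrableI:
  fixes h :: "'a \<Rightarrow> complex"
  assumes "integrable M (\<lambda>x. Re (h x))" "integrable M (\<lambda>x. Im (h x))"
  shows "integrable M h"
proof -
  have "integrable M (\<lambda>x. complex_of_real (Re (h x)) + \<i> * complex_of_real (Im (h x)))"
    using assms by (intro Bochner_Integration.integrable_add integrable_mult_right) (auto simp: complex_of_real_integrable_eq)
  moreover have "(\<lambda>x. complex_of_real (Re (h x)) + \<i> * complex_of_real (Im (h x))) = h"
    by (auto simp: complex_eq_iff)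
  ultimately show ?thesis by simp
qed

lemma L2c_mult_cnj: assumes "L2c M f" "L2c M g" shows "integrable M (\<lambda>x. f x * cnj (g x))"
proof (rule complex_integrableI)
  show "integrable M (\<lambda>x. Re (f x * cnj (g x)))"
    using assms unfolding L2c_def by (auto intro!: Bochner_Integration.integrable_add L2r_mult)
  show "integrable M (\<lambda>x. Im (f x * cnj (g x)))"
    using assms unfolding L2c_def by (auto intro!: Bochner_Integration.integrable_diff L2r_mult)
qed

lemma comp_meas:
  assumes "t < L"
  shows "(\<lambda>z. Re (z t)) \<in> borel_measurable (PiM {..<L} (\<lambda>_. borel :: complex measure))"
    "(\<lambda>z. Im (z t)) \<in> borel_measurable (PiM {..<L} (\<lambda>_. borel :: complex measure))"
proof -
  have c: "(\<lambda>z. z t) \<in> measurable (PiM {..<L} (\<lambda>_. borel::complex measure)) borel"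
    using measurable_component_singleton[of t "{..<L}" "\<lambda>_. borel::complex measure"] assms by simp
  show "(\<lambda>z. Re (z t)) \<in> borel_measurable (PiM {..<L} (\<lambda>_. borel :: complex measure))"
    using measurable_compose[OF c borel_measurable_Re] by simp
  show "(\<lambda>z. Im (z t)) \<in> borel_measurable (PiM {..<L} (\<lambda>_. borel :: complex measure))"
    using measurable_compose[OF c borel_measurable_Im] by simp
qed

lemma Phi_meas: "(\<lambda>z. \<Sum>t<L. p t * Re (z t) + q t * Im (z t)) \<in> borel_measurable (PiM {..<L} (\<lambda>_. borel :: complex measure))"
  by (intro borel_measurable_sum borel_measurable_add borel_measurable_times borel_measurable_const comp_meas) auto




lemma noise_facts:
  assumes P: "prob_space P" and s: "\<sigma> > 0" and D: "distributed P lborel X (normal_density 0 \<sigma>)"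
  shows "L2r P X" "integral\<^sup>L P X = 0" "integral\<^sup>L P (\<lambda>\<omega>. X \<omega> * X \<omega>) = \<sigma>\<^sup>2"
proof -
  interpret prob_space P by fact
  have m: "X \<in> borel_measurable P" using distributed_measurable[OF D] by simp
  have "real_gaussian_rv P X" unfolding real_gaussian_rv_def using m s D by blast
  then show "L2r P X" using gauss_L2r P by blast
  show e: "integral\<^sup>L P X = 0" using normal_distributed_expectation[OF s D] .
  have "variance X = \<sigma>\<^sup>2" using normal_distributed_variance[OF s D] .
  then show "integral\<^sup>L P (\<lambda>\<omega>. X \<omega> * X \<omega>) = \<sigma>\<^sup>2" using e by (simp add: power2_eq_square)
qed

context
  fixes P :: "'w measure" and L :: nat and N :: "nat \<Rightarrow> 'w \<Rightarrow> real" and \<sigma> :: real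
  assumes P: "prob_space P" and s: "\<sigma> > 0"
    and N_indep: "prob_space.indep_vars P (\<lambda>_. borel) N {..<L}"
    and N_distr: "\<forall>t<L. distributed P lborel (N t) (normal_density 0 \<sigma>)"
begin

lemma N_L2: "t < L \<Longrightarrow> L2r P (N t)"
  using noise_facts(1)[OF P s] N_distr by blast

lemma N_cov: assumes "t < L" "u < L"
  shows "integral\<^sup>L P (\<lambda>\<omega>. N t \<omega> * N u \<omega>) = (if t = u then \<sigma>\<^sup>2 else 0)"
proof (cases "t = u")
  case True then show ?thesis using noise_facts(3)[OF P s] N_distr assms by simp
next
  case False
  interpret prob_space P by (rule P)
  have ind: "indep_vars (\<lambda>_. borel) N {t, u}"
    using indep_vars_subset[OF N_indep] assms by auto
  have int: "\<And>i. i \<in> {t,u} \<Longrightarrow> integrable P (N i)"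
    using assms N_L2 L2r_integrable[OF P] by auto
  have "integral\<^sup>L P (\<lambda>\<omega>. \<Prod>i\<in>{t,u}. N i \<omega>) = (\<Prod>i\<in>{t,u}. integral\<^sup>L P (N i))"
    by (rule indep_vars_lebesgue_integral[OF _ ind int]) auto
  moreover have "integral\<^sup>L P (N t) = 0" using noise_facts(2)[OF P s] N_distr assms by blast
  ultimately show ?thesis using False by simp
qed

lemma N_sq: "integral\<^sup>L P (\<lambda>\<omega>. (\<Sum>t<L. c t * N t \<omega>)\<^sup>2) = \<sigma>\<^sup>2 * (\<Sum>t<L. (c t)\<^sup>2)"
proof -
  have e: "(\<lambda>\<omega>. (\<Sum>t<L. c t * N t \<omega>)\<^sup>2) = (\<lambda>\<omega>. \<Sum>t<L. \<Sum>u<L. c t * c u * (N t \<omega> * N u \<omega>))"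
    by (auto simp: power2_eq_square sum_product algebra_simps)
  have i: "\<And>t u. t < L \<Longrightarrow> u < L \<Longrightarrow> integrable P (\<lambda>\<omega>. c t * c u * (N t \<omega> * N u \<omega>))"
    by (intro integrable_mult_right L2r_mult N_L2)
  have "integral\<^sup>L P (\<lambda>\<omega>. \<Sum>t<L. \<Sum>u<L. c t * c u * (N t \<omega> * N u \<omega>))
      = (\<Sum>t<L. \<Sum>u<L. c t * c u * integral\<^sup>L P (\<lambda>\<omega>. N t \<omega> * N u \<omega>))"
  proof -
    have "integral\<^sup>L P (\<lambda>\<omega>. \<Sum>t<L. \<Sum>u<L. c t * c u * (N t \<omega> * N u \<omega>))
      = (\<Sum>t<L. integral\<^sup>L P (\<lambda>\<omega>. \<Sum>u<L. c t * c u * (N t \<omega> * N u \<omega>)))"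
      using i by (intro Bochner_Integration.integral_sum Bochner_Integration.integrable_sum) auto
    also have "\<dots> = (\<Sum>t<L. \<Sum>u<L. integral\<^sup>L P (\<lambda>\<omega>. c t * c u * (N t \<omega> * N u \<omega>)))"
      using i by (intro sum.cong refl Bochner_Integration.integral_sum) auto
    finally show ?thesis by simp
  qed
  also have "\<dots> = (\<Sum>t<L. \<Sum>u<L. c t * c u * (if t = u then \<sigma>\<^sup>2 else 0))"
    by (intro sum.cong refl) (simp add: N_cov)
  also have "\<dots> = \<sigma>\<^sup>2 * (\<Sum>t<L. (c t)\<^sup>2)"
    by (simp add: sum_distrib_left power2_eq_square algebra_simps if_distrib cong: if_cong)
  finally show ?thesis using e by simp
qed

end



context
  fixes P :: "'w measure" and L :: nat and N :: "nat \<Rightarrow> 'w \<Rightarrow> real" and \<sigma> :: real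
    and Z :: "nat \<Rightarrow> 'w \<Rightarrow> complex"
  assumes P: "prob_space P" and s: "\<sigma> > 0"
    and N_indep: "prob_space.indep_vars P (\<lambda>_. borel) N {..<L}"
    and N_distr: "\<forall>t<L. distributed P lborel (N t) (normal_density 0 \<sigma>)"
    and Z_L2: "\<forall>t<L. L2c P (Z t)"
    and ZN_indep: "prob_space.indep_var P
         (PiM {..<L} (\<lambda>_. borel :: complex measure)) (\<lambda>\<omega>. restrict (\<lambda>t. Z t \<omega>) {..<L})
         (PiM {..<L} (\<lambda>_. borel :: complex measure))
           (\<lambda>\<omega>. restrict (\<lambda>t. complex_of_real (N t \<omega>)) {..<L})"
begin

lemma ZA_L2: "L2r P (\<lambda>\<omega>. \<Sum>t<L. p t * Re (Z t \<omega>) + q t * Im (Z t \<omega>))"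
  using Z_L2 unfolding L2c_def by (intro L2r_sum[OF _ P] L2r_add L2r_cmult) auto

lemma NB_L2: "L2r P (\<lambda>\<omega>. \<Sum>t<L. c t * N t \<omega>)"
  using N_L2[OF P s N_indep N_distr] by (intro L2r_sum[OF _ P] L2r_cmult) auto

lemma cross: "integral\<^sup>L P (\<lambda>\<omega>. (\<Sum>t<L. p t * Re (Z t \<omega>) + q t * Im (Z t \<omega>)) * (\<Sum>t<L. c t * N t \<omega>)) = 0"
proof -
  interpret prob_space P by (rule P)
  define \<Phi> where "\<Phi> = (\<lambda>z. \<Sum>t<L. p t * Re (z t) + q t * Im (z t))"
  define \<Psi> where "\<Psi> = (\<lambda>z. \<Sum>t<L. c t * Re (z t) + 0 * Im (z t))"
  have iv: "indep_var borel (\<Phi> \<circ> (\<lambda>\<omega>. restrict (\<lambda>t. Z t \<omega>) {..<L}))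
                   borel (\<Psi> \<circ> (\<lambda>\<omega>. restrict (\<lambda>t. complex_of_real (N t \<omega>)) {..<L}))"
    unfolding \<Phi>_def \<Psi>_def by (rule indep_var_compose[OF ZN_indep Phi_meas Phi_meas])
  have e1: "\<Phi> \<circ> (\<lambda>\<omega>. restrict (\<lambda>t. Z t \<omega>) {..<L}) = (\<lambda>\<omega>. \<Sum>t<L. p t * Re (Z t \<omega>) + q t * Im (Z t \<omega>))"
    unfolding \<Phi>_def by (auto intro!: sum.cong)
  have e2: "\<Psi> \<circ> (\<lambda>\<omega>. restrict (\<lambda>t. complex_of_real (N t \<omega>)) {..<L}) = (\<lambda>\<omega>. \<Sum>t<L. c t * N t \<omega>)"
    unfolding \<Psi>_def by (auto intro!: sum.cong)
  have iv2: "indep_var borel (\<lambda>\<omega>. \<Sum>t<L. p t * Re (Z t \<omega>) + q t * Im (Z t \<omega>)) borel (\<lambda>\<omega>. \<Sum>t<L. c t * N t \<omega>)"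
    using iv unfolding e1 e2 .
  have "integral\<^sup>L P (\<lambda>\<omega>. \<Sum>t<L. c t * N t \<omega>) = (\<Sum>t<L. c t * integral\<^sup>L P (N t))"
    using N_L2[OF P s N_indep N_distr] L2r_integrable[OF P]
    by (subst Bochner_Integration.integral_sum) auto
  also have "\<dots> = 0" using noise_facts(2)[OF P s] N_distr by simp
  finally have z: "integral\<^sup>L P (\<lambda>\<omega>. \<Sum>t<L. c t * N t \<omega>) = 0" .
  show ?thesis
    by (subst indep_var_lebesgue_integral[OF iv2 L2r_integrable[OF P ZA_L2] L2r_integrable[OF P NB_L2]]) (simp add: z)
qed

lemma quad_main:
  fixes \<alpha> \<beta> :: "nat \<Rightarrow> complex"
  defines "Y \<equiv> (\<lambda>\<omega>. (\<Sum>t<L. \<alpha> t * Z t \<omega>) + (\<Sum>t<L. \<beta> t * complex_of_real (N t \<omega>)))"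
  shows "Im (integral\<^sup>L P (\<lambda>\<omega>. Y \<omega> * cnj (Y \<omega>))) = 0"
    "Re (integral\<^sup>L P (\<lambda>\<omega>. Y \<omega> * cnj (Y \<omega>))) \<ge> \<sigma>\<^sup>2 * (\<Sum>t<L. (cmod (\<beta> t))\<^sup>2)"
proof -
  define RA where "RA = (\<lambda>\<omega>. \<Sum>t<L. Re (\<alpha> t) * Re (Z t \<omega>) + (- Im (\<alpha> t)) * Im (Z t \<omega>))"
  define IA where "IA = (\<lambda>\<omega>. \<Sum>t<L. Im (\<alpha> t) * Re (Z t \<omega>) + Re (\<alpha> t) * Im (Z t \<omega>))"
  define RB where "RB = (\<lambda>\<omega>. \<Sum>t<L. Re (\<beta> t) * N t \<omega>)"
  define IB where "IB = (\<lambda>\<omega>. \<Sum>t<L. Im (\<beta> t) * N t \<omega>)"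
  have ReY: "\<And>\<omega>. Re (Y \<omega>) = RA \<omega> + RB \<omega>"
    unfolding Y_def RA_def RB_def by (simp add: Re_sum sum.distrib)
  have ImY: "\<And>\<omega>. Im (Y \<omega>) = IA \<omega> + IB \<omega>"
    unfolding Y_def IA_def IB_def by (simp add: Im_sum sum.distrib)
  have LRA: "L2r P RA" unfolding RA_def by (rule ZA_L2)
  have LIA: "L2r P IA" unfolding IA_def by (rule ZA_L2)
  have LRB: "L2r P RB" unfolding RB_def by (rule NB_L2)
  have LIB: "L2r P IB" unfolding IB_def by (rule NB_L2)
  have eq: "(\<lambda>\<omega>. Y \<omega> * cnj (Y \<omega>)) = (\<lambda>\<omega>. complex_of_real
      ((RA \<omega>)\<^sup>2 + (IA \<omega>)\<^sup>2 + (RB \<omega>)\<^sup>2 + (IB \<omega>)\<^sup>2 + 2 * (RA \<omega> * RB \<omega>) + 2 * (IA \<omega> * IB \<omega>)))"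
    by (rule ext, subst complex_mult_cnj) (simp add: ReY ImY power2_sum algebra_simps)
  have int: "integrable P (\<lambda>\<omega>. (RA \<omega>)\<^sup>2)" "integrable P (\<lambda>\<omega>. (IA \<omega>)\<^sup>2)"
    "integrable P (\<lambda>\<omega>. (RB \<omega>)\<^sup>2)" "integrable P (\<lambda>\<omega>. (IB \<omega>)\<^sup>2)"
    "integrable P (\<lambda>\<omega>. 2 * (RA \<omega> * RB \<omega>))" "integrable P (\<lambda>\<omega>. 2 * (IA \<omega> * IB \<omega>))"
    using LRA LIA LRB LIB by (auto simp: L2r_def intro!: integrable_mult_right L2r_mult)
  have c1: "integral\<^sup>L P (\<lambda>\<omega>. RA \<omega> * RB \<omega>) = 0" unfolding RA_def RB_def by (rule cross)
  have c2: "integral\<^sup>L P (\<lambda>\<omega>. IA \<omega> * IB \<omega>) = 0" unfolding IA_def IB_def by (rule cross)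
  have n1: "integral\<^sup>L P (\<lambda>\<omega>. (RB \<omega>)\<^sup>2) = \<sigma>\<^sup>2 * (\<Sum>t<L. (Re (\<beta> t))\<^sup>2)"
    unfolding RB_def by (rule N_sq[OF P s N_indep N_distr])
  have n2: "integral\<^sup>L P (\<lambda>\<omega>. (IB \<omega>)\<^sup>2) = \<sigma>\<^sup>2 * (\<Sum>t<L. (Im (\<beta> t))\<^sup>2)"
    unfolding IB_def by (rule N_sq[OF P s N_indep N_distr])
  have p1: "integral\<^sup>L P (\<lambda>\<omega>. (RA \<omega>)\<^sup>2) \<ge> 0" by simp
  have p2: "integral\<^sup>L P (\<lambda>\<omega>. (IA \<omega>)\<^sup>2) \<ge> 0" by simp
  define V where "V = integral\<^sup>L P (\<lambda>\<omega>. (RA \<omega>)\<^sup>2 + (IA \<omega>)\<^sup>2 + (RB \<omega>)\<^sup>2 + (IB \<omega>)\<^sup>2 + 2 * (RA \<omega> * RB \<omega>) + 2 * (IA \<omega> * IB \<omega>))"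
  have V: "V = integral\<^sup>L P (\<lambda>\<omega>. (RA \<omega>)\<^sup>2) + integral\<^sup>L P (\<lambda>\<omega>. (IA \<omega>)\<^sup>2) + integral\<^sup>L P (\<lambda>\<omega>. (RB \<omega>)\<^sup>2)
     + integral\<^sup>L P (\<lambda>\<omega>. (IB \<omega>)\<^sup>2) + integral\<^sup>L P (\<lambda>\<omega>. 2 * (RA \<omega> * RB \<omega>)) + integral\<^sup>L P (\<lambda>\<omega>. 2 * (IA \<omega> * IB \<omega>))"
    unfolding V_def using int by (simp add: Bochner_Integration.integral_add Bochner_Integration.integrable_add)
  have I: "integral\<^sup>L P (\<lambda>\<omega>. Y \<omega> * cnj (Y \<omega>)) = complex_of_real V"
    unfolding eq V_def by (rule integral_complex_of_real)
  show "Im (integral\<^sup>L P (\<lambda>\<omega>. Y \<omega> * cnj (Y \<omega>))) = 0" unfolding I by simp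
  have "\<sigma>\<^sup>2 * (\<Sum>t<L. (cmod (\<beta> t))\<^sup>2) = \<sigma>\<^sup>2 * (\<Sum>t<L. (Re (\<beta> t))\<^sup>2) + \<sigma>\<^sup>2 * (\<Sum>t<L. (Im (\<beta> t))\<^sup>2)"
    by (simp add: cmod_power2 sum.distrib algebra_simps)
  also have "\<dots> \<le> V" unfolding V n1 n2 using c1 c2 p1 p2 by simp
  finally show "Re (integral\<^sup>L P (\<lambda>\<omega>. Y \<omega> * cnj (Y \<omega>))) \<ge> \<sigma>\<^sup>2 * (\<Sum>t<L. (cmod (\<beta> t))\<^sup>2)"
    unfolding I by simp
qed

end



definition E :: "nat \<Rightarrow> int \<Rightarrow> complex" where
  "E M d = exp (2 * of_real pi * \<i> * of_int d / of_nat M)"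

lemma E_add: "E M (a + b) = E M a * E M b"
  unfolding E_def by (simp add: exp_add[symmetric] add_divide_distrib ring_distribs)

lemma E_zero[simp]: "E M 0 = 1" unfolding E_def by simp

lemma E_cnj: "cnj (E M d) = E M (- d)"
  unfolding E_def by (simp add: exp_cnj)

lemma E_period: assumes "M > 0" shows "E M (int M * k) = 1"
proof -
  have "2 * of_real pi * \<i> * of_int (int M * k) / of_nat M = \<i> * (of_int k * (of_real pi * 2))"
    using assms by (simp add: field_simps)
  then show ?thesis unfolding E_def by simp
qed

lemma E_pow: "E M (j * int r) = (E M j) ^ r"
proof -
  have "2 * of_real pi * \<i> * of_int (j * int r) / of_nat M = of_nat r * (2 * of_real pi * \<i> * of_int j / of_nat M)"
    by (simp add: field_simps)
  note eq = this
  show ?thesis unfolding E_def eq exp_of_nat_mult[symmetric] by (rule refl)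
qed

lemma E_ne1: assumes "j \<noteq> 0" "\<bar>j\<bar> < int M" shows "E M j \<noteq> 1"
proof
  assume "E M j = 1"
  then obtain n :: int where n: "Im (2 * of_real pi * \<i> * of_int j / of_nat M) = of_int (2 * n) * pi"
    unfolding E_def exp_eq_1 by blast
  have M: "M > 0" using assms by auto
  have "2 * pi * j / M = 2 * n * pi" using n by simp
  then have "real_of_int j = real_of_int n * real M" using M by (simp add: field_simps)
  then have j: "j = n * int M" by (metis of_int_eq_iff of_int_mult of_int_of_nat_eq)
  show False
  proof (cases "n = 0")
    case True then show ?thesis using j assms by simp
  next
    case False
    then have "\<bar>n\<bar> \<ge> 1" by simp
    then have "\<bar>j\<bar> \<ge> int M" using j mult_right_mono[of 1 "\<bar>n\<bar>" "int M"] by (simp add: abs_mult)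
    then show ?thesis using assms by simp
  qed
qed

lemma orth: assumes "m < M" "m' < M"
  shows "(\<Sum>r<M. E M ((int m' - int m) * int r)) = (if m = m' then of_nat M else 0)"
proof (cases "m = m'")
  case True then show ?thesis by simp
next
  case False
  define j where "j = int m' - int m"
  have j0: "j \<noteq> 0" "\<bar>j\<bar> < int M" using False assms unfolding j_def by auto
  have "(\<Sum>r<M. E M (j * int r)) = (\<Sum>r<M. (E M j) ^ r)" by (simp add: E_pow)
  also have "\<dots> = ((E M j) ^ M - 1) / (E M j - 1)" by (rule geometric_sum[OF E_ne1[OF j0]])
  also have "(E M j) ^ M = 1"
    using E_pow[of M j M, symmetric] E_period[of M j] assms by (simp add: mult.commute)
  finally show ?thesis using False unfolding j_def by simp
qed

definition Xf :: "nat \<Rightarrow> (nat \<Rightarrow> complex) \<Rightarrow> int \<Rightarrow> complex" where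
  "Xf M x d = (\<Sum>m<M. cnj (x m) * E M (- (int m * d)))"

lemma parseval: "(\<Sum>r<M. Xf M x (int r) * cnj (Xf M x (int r))) = of_nat M * (\<Sum>m<M. x m * cnj (x m))"
proof -
  have "(\<Sum>r<M. Xf M x (int r) * cnj (Xf M x (int r)))
      = (\<Sum>r<M. \<Sum>m<M. \<Sum>m'<M. cnj (x m) * x m' * E M ((int m' - int m) * int r))"
  proof (rule sum.cong[OF refl])
    fix r assume "r \<in> {..<M}"
    have c: "cnj (Xf M x (int r)) = (\<Sum>m'<M. x m' * E M (int m' * int r))"
      unfolding Xf_def by (simp add: cnj_sum E_cnj)
    have p: "(cnj (x m) * E M (- (int m * int r))) * (x m' * E M (int m' * int r))
        = cnj (x m) * x m' * E M ((int m' - int m) * int r)" for m m'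
    proof -
      have "(int m' - int m) * int r = - (int m * int r) + int m' * int r" by (simp add: algebra_simps)
      then show ?thesis by (simp only: E_add mult_ac)
    qed
    show "Xf M x (int r) * cnj (Xf M x (int r)) = (\<Sum>m<M. \<Sum>m'<M. cnj (x m) * x m' * E M ((int m' - int m) * int r))"
      unfolding c by (simp only: Xf_def sum_product p)
  qed
  also have "\<dots> = (\<Sum>m<M. \<Sum>m'<M. cnj (x m) * x m' * (\<Sum>r<M. E M ((int m' - int m) * int r)))"
  proof -
    have "(\<Sum>r<M. \<Sum>m<M. \<Sum>m'<M. cnj (x m) * x m' * E M ((int m' - int m) * int r))
       = (\<Sum>m<M. \<Sum>r<M. \<Sum>m'<M. cnj (x m) * x m' * E M ((int m' - int m) * int r))"
      by (rule sum.swap)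
    also have "\<dots> = (\<Sum>m<M. \<Sum>m'<M. \<Sum>r<M. cnj (x m) * x m' * E M ((int m' - int m) * int r))"
      by (intro sum.cong refl sum.swap)
    finally show ?thesis by (simp only: sum_distrib_left)
  qed
  also have "\<dots> = (\<Sum>m<M. \<Sum>m'<M. cnj (x m) * x m' * (if m = m' then of_nat M else 0))"
    by (intro sum.cong refl) (simp add: orth)
  also have "\<dots> = of_nat M * (\<Sum>m<M. x m * cnj (x m))"
    by (simp add: sum_distrib_left algebra_simps if_distrib cong: if_cong)
  finally show ?thesis .
qed




lemma reindex_shift:
  fixes f :: "int \<Rightarrow> 'b::comm_monoid_add"
  assumes L: "L > 0" and per: "\<And>d. f (d mod int L) = f d"
  shows "(\<Sum>t<L. f (int t - c)) = (\<Sum>t<L. f (int t))"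
proof -
  define h where "h t = nat ((int t - c) mod int L)" for t
  have hi: "int (h t) = (int t - c) mod int L" for t unfolding h_def using L by simp
  have inj: "inj_on h {..<L}"
  proof (rule inj_onI)
    fix t t' assume t: "t \<in> {..<L}" "t' \<in> {..<L}" and e: "h t = h t'"
    then have "(int t - c) mod int L = (int t' - c) mod int L" using hi by metis
    then have "((int t - c) + c) mod int L = ((int t' - c) + c) mod int L" by (rule mod_add_cong) (rule refl)
    then have "int t mod int L = int t' mod int L" by simp
    then show "t = t'" using t by simp
  qed
  have sub: "h ` {..<L} \<subseteq> {..<L}"
  proof
    fix s assume "s \<in> h ` {..<L}"
    then obtain t where "s = h t" by auto
    then have "int s = (int t - c) mod int L" using hi by simp
    then have "int s < int L" using L by simp
    then show "s \<in> {..<L}" by simp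
  qed
  have img: "h ` {..<L} = {..<L}" by (rule endo_inj_surj[OF _ sub inj]) simp
  have "(\<Sum>t<L. f (int t - c)) = (\<Sum>t<L. f (int (h t)))"
    by (intro sum.cong refl) (simp add: hi per)
  also have "\<dots> = (\<Sum>s\<in>h ` {..<L}. f (int s))" by (simp add: sum.reindex[OF inj])
  finally show ?thesis unfolding img .
qed

lemma reindex_block:
  fixes F :: "int \<Rightarrow> 'b::comm_monoid_add"
  assumes M: "M > 0"
  shows "(\<Sum>s<b*M. F (int s)) = (\<Sum>r<M. \<Sum>k<b. F (int r + int k * int M))"
proof -
  define \<phi> where "\<phi> = (\<lambda>(r, k). r + k * M)"
  have inj: "inj_on \<phi> ({..<M} \<times> {..<b})"
  proof (rule inj_onI, clarify)
    fix r k r' k' assume a: "r < M" "k < b" "r' < M" "k' < b" and e: "\<phi> (r, k) = \<phi> (r', k')"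
    then have e': "r + k * M = r' + k' * M" unfolding \<phi>_def by simp
    then have "(r + k * M) mod M = (r' + k' * M) mod M" by simp
    then have "r = r'" using a by simp
    moreover have "(r + k * M) div M = (r' + k' * M) div M" using e' by simp
    then have "k = k'" using a M by simp
    ultimately show "r = r' \<and> k = k'" by simp
  qed
  have img: "\<phi> ` ({..<M} \<times> {..<b}) = {..<b*M}"
  proof
    show "\<phi> ` ({..<M} \<times> {..<b}) \<subseteq> {..<b*M}"
    proof (rule subsetI)
      fix p assume "p \<in> \<phi> ` ({..<M} \<times> {..<b})"
      then obtain r k where p: "p = \<phi> (r, k)" "r < M" "k < b" by auto
      from p have "r < M" "k < b" by auto
      then have "r + k * M < M + k * M" by simp
      also have "\<dots> = (k + 1) * M" by simp
      also have "\<dots> \<le> b * M" using \<open>k < b\<close> by (intro mult_right_mono) auto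
      finally show "p \<in> {..<b*M}" unfolding p \<phi>_def by simp
    qed
    show "{..<b*M} \<subseteq> \<phi> ` ({..<M} \<times> {..<b})"
    proof
      fix s assume s: "s \<in> {..<b*M}"
      have "s mod M < M" using M by simp
      moreover have "s div M < b" using s M by (simp add: less_mult_imp_div_less)
      moreover have "s = \<phi> (s mod M, s div M)" unfolding \<phi>_def by simp
      ultimately show "s \<in> \<phi> ` ({..<M} \<times> {..<b})" by blast
    qed
  qed
  have "(\<Sum>s<b*M. F (int s)) = (\<Sum>p\<in>{..<M} \<times> {..<b}. F (int (\<phi> p)))"
    unfolding img[symmetric] by (simp add: sum.reindex[OF inj])
  also have "\<dots> = (\<Sum>r<M. \<Sum>k<b. F (int (\<phi> (r, k))))"
    by (simp add: sum.cartesian_product)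
  also have "\<dots> = (\<Sum>r<M. \<Sum>k<b. F (int r + int k * int M))"
    unfolding \<phi>_def by simp
  finally show ?thesis .
qed

lemma Xf_period: "Xf M x (d + int M * k) = Xf M x d" if "M > 0"
proof -
  have "E M (- (int m * (d + int M * k))) = E M (- (int m * d))" for m
  proof -
    have "- (int m * (d + int M * k)) = - (int m * d) + int M * (- (int m * k))" by (simp add: algebra_simps)
    note eq = this
    show ?thesis unfolding eq E_add E_period[OF that] by simp
  qed
  then show ?thesis unfolding Xf_def by simp
qed

lemma Xf_modL: assumes "L = b * M" "M > 0" shows "Xf M x (d mod int L) = Xf M x d"
proof -
  have "d mod int L = d + int M * (- (int b * (d div int L)))"
    using assms by (simp add: minus_div_mult_eq_mod[symmetric] algebra_simps)
  then show ?thesis by (simp only: Xf_period[OF assms(2)])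
qed

lemma parseval_real: "(\<Sum>r<M. (cmod (Xf M x (int r)))\<^sup>2) = real M * (\<Sum>m<M. (cmod (x m))\<^sup>2)"
proof -
  have "complex_of_real (\<Sum>r<M. (cmod (Xf M x (int r)))\<^sup>2) = complex_of_real (real M * (\<Sum>m<M. (cmod (x m))\<^sup>2))"
  proof -
    have e: "\<And>z. z * cnj z = complex_of_real ((cmod z)\<^sup>2)" using complex_norm_square by metis
    show ?thesis using parseval[of M x] unfolding e by (simp only: of_real_sum of_real_mult of_real_of_nat_eq)
  qed
  then show ?thesis using of_real_eq_iff by blast
qed

lemma main_bound:
  assumes LbM: "L = b * M" and b: "b > 0" and M: "M > 0"
  shows "(\<Sum>t<L. (cmod (per L g (int t - c)))\<^sup>2 * (cmod (Xf M x (int t - c)))\<^sup>2)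
     \<ge> Kg L b g * real M * (\<Sum>m<M. (cmod (x m))\<^sup>2)"
proof -
  have L: "L > 0" using LbM b M by simp
  define f where "f d = (cmod (per L g d))\<^sup>2 * (cmod (Xf M x d))\<^sup>2" for d
  have per: "f (d mod int L) = f d" for d
    unfolding f_def per_def using Xf_modL[OF LbM M] by simp
  have "(\<Sum>t<L. f (int t - c)) = (\<Sum>t<L. f (int t))" using reindex_shift[of L f c] L per by blast
  also have "\<dots> = (\<Sum>r<M. \<Sum>k<b. f (int r + int k * int M))" unfolding LbM by (rule reindex_block[OF M])
  also have "\<dots> = (\<Sum>r<M. (cmod (Xf M x (int r)))\<^sup>2 * (\<Sum>k<b. (cmod (per L g (int r + int k * int M)))\<^sup>2))"
    unfolding f_def using Xf_period[OF M] by (simp add: sum_distrib_left mult.commute mult.left_commute)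
  finally have eq: "(\<Sum>t<L. f (int t - c)) = \<dots>" .
  have Kle: "Kg L b g \<le> (\<Sum>k<b. (cmod (per L g (int r + int k * int M)))\<^sup>2)" if r: "r < M" for r
  proof -
    have "M \<le> L" using LbM b by simp
    then have "r \<in> {..<L}" using r by simp
    moreover have "L div b = M" using LbM b by simp
    ultimately show ?thesis unfolding Kg_def by (intro Min_le) auto
  qed
  have "Kg L b g * real M * (\<Sum>m<M. (cmod (x m))\<^sup>2) = (\<Sum>r<M. (cmod (Xf M x (int r)))\<^sup>2 * Kg L b g)"
  proof -
    have "(\<Sum>r<M. (cmod (Xf M x (int r)))\<^sup>2 * Kg L b g) = (\<Sum>r<M. (cmod (Xf M x (int r)))\<^sup>2) * Kg L b g"
      by (simp add: sum_distrib_right)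
    then show ?thesis unfolding parseval_real by simp
  qed
  also have "\<dots> \<le> (\<Sum>r<M. (cmod (Xf M x (int r)))\<^sup>2 * (\<Sum>k<b. (cmod (per L g (int r + int k * int M)))\<^sup>2))"
    by (intro sum_mono mult_left_mono Kle) auto
  finally show ?thesis using eq unfolding f_def by simp
qed




lemma inv_exists:
  fixes C :: "nat \<Rightarrow> nat \<Rightarrow> complex" and c :: real
  assumes pos: "\<forall>x :: nat \<Rightarrow> complex. Re (\<Sum>m<n. \<Sum>m'<n. cnj (x m) * C m m' * x m') \<ge> c * (\<Sum>m<n. (cmod (x m))\<^sup>2)"
    and c: "c > 0"
  shows "\<exists>D :: nat \<Rightarrow> nat \<Rightarrow> complex.
            (\<forall>i<n. \<forall>j<n. (\<Sum>k<n. C i k * D k j) = (if i = j then 1 else 0)) \<and>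
            (\<forall>i<n. \<forall>j<n. (\<Sum>k<n. D i k * C k j) = (if i = j then 1 else 0))"
proof -
  define A where "A = mat n n (\<lambda>(i,j). C i j)"
  have A: "A \<in> carrier_mat n n" unfolding A_def by simp
  have "det A \<noteq> 0"
  proof
    assume "det A = 0"
    then obtain v where v: "v \<in> carrier_vec n" "v \<noteq> 0\<^sub>v n" "A *\<^sub>v v = 0\<^sub>v n"
      using det_0_iff_vec_prod_zero_field[OF A] by blast
    define x where "x m = v $ m" for m
    have row0: "(\<Sum>m'<n. C m m' * x m') = 0" if "m < n" for m
    proof -
      have "(A *\<^sub>v v) $ m = 0" using v(3) that by simp
      moreover have "(A *\<^sub>v v) $ m = (\<Sum>m'\<in>{0..<n}. C m m' * x m')"
        using that v(1) unfolding A_def x_def by (simp add: scalar_prod_def)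
      ultimately show ?thesis by (simp add: atLeast0LessThan)
    qed
    have "(\<Sum>m<n. \<Sum>m'<n. cnj (x m) * C m m' * x m') = (\<Sum>m<n. cnj (x m) * (\<Sum>m'<n. C m m' * x m'))"
      by (simp add: sum_distrib_left mult.assoc)
    also have "\<dots> = 0" using row0 by simp
    finally have q0: "(\<Sum>m<n. \<Sum>m'<n. cnj (x m) * C m m' * x m') = 0" .
    obtain i where i: "i < n" "v $ i \<noteq> 0"
      using v(1,2) by (metis carrier_vecD index_zero_vec(1) eq_vecI index_zero_vec(2))
    have "0 < (cmod (x i))\<^sup>2" using i unfolding x_def by simp
    also have "\<dots> \<le> (\<Sum>m<n. (cmod (x m))\<^sup>2)"
      using i by (intro member_le_sum) auto
    finally have "0 < c * (\<Sum>m<n. (cmod (x m))\<^sup>2)" using c by simp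
    then show False using pos[rule_format, of x] q0 by simp
  qed
  from det_non_zero_imp_unit[OF A this, of "()"]
  obtain B where B: "B \<in> carrier_mat n n" "B * A = 1\<^sub>m n" "A * B = 1\<^sub>m n"
    unfolding Units_def ring_mat_def by auto
  define D where "D i j = B $$ (i, j)" for i j
  have 1: "(\<Sum>k<n. C i k * D k j) = (if i = j then 1 else 0)" if "i < n" "j < n" for i j
  proof -
    have "(A * B) $$ (i, j) = (if i = j then 1 else 0)" using B(3) that by simp
    moreover have "(A * B) $$ (i, j) = (\<Sum>k\<in>{0..<n}. C i k * D k j)"
      using that B(1) unfolding A_def D_def by (simp add: scalar_prod_def)
    ultimately show ?thesis by (simp add: atLeast0LessThan)
  qed
  have 2: "(\<Sum>k<n. D i k * C k j) = (if i = j then 1 else 0)" if "i < n" "j < n" for i j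
  proof -
    have "(B * A) $$ (i, j) = (if i = j then 1 else 0)" using B(2) that by simp
    moreover have "(B * A) $$ (i, j) = (\<Sum>k\<in>{0..<n}. D i k * C k j)"
      using that B(1) unfolding A_def D_def by (simp add: scalar_prod_def)
    ultimately show ?thesis by (simp add: atLeast0LessThan)
  qed
  show ?thesis using 1 2 by blast
qed


lemma L2c_cmult': "L2c M f \<Longrightarrow> L2c M (\<lambda>x. f x * c)"
  using L2c_cmult[of M f c] by (simp add: mult.commute)

lemma lin_rearr:
  fixes u :: "nat \<Rightarrow> complex"
  shows "(\<Sum>m\<in>I. u m * ((\<Sum>t\<in>T. f t * a m t) + (\<Sum>t\<in>T. g t * b m t)))
       = (\<Sum>t\<in>T. (\<Sum>m\<in>I. u m * a m t) * f t) + (\<Sum>t\<in>T. (\<Sum>m\<in>I. u m * b m t) * g t)"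
proof -
  have "(\<Sum>m\<in>I. u m * ((\<Sum>t\<in>T. f t * a m t) + (\<Sum>t\<in>T. g t * b m t)))
      = (\<Sum>m\<in>I. \<Sum>t\<in>T. u m * a m t * f t) + (\<Sum>m\<in>I. \<Sum>t\<in>T. u m * b m t * g t)"
    by (simp add: distrib_left sum.distrib sum_distrib_left mult_ac)
  also have "\<dots> = (\<Sum>t\<in>T. \<Sum>m\<in>I. u m * a m t * f t) + (\<Sum>t\<in>T. \<Sum>m\<in>I. u m * b m t * g t)"
    by (simp only: sum.swap[of _ I T])
  also have "\<dots> = (\<Sum>t\<in>T. (\<Sum>m\<in>I. u m * a m t) * f t) + (\<Sum>t\<in>T. (\<Sum>m\<in>I. u m * b m t) * g t)"
    by (simp only: sum_distrib_right)
  finally show ?thesis .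
qed

theorem mainTheorem3:
  fixes P :: "'w measure"
    and L a b :: nat
    and g :: "nat \<Rightarrow> complex"
    and \<sigma>\<^sub>0 :: real
    and N :: "nat \<Rightarrow> 'w \<Rightarrow> real"
    and Z :: "nat \<Rightarrow> 'w \<Rightarrow> complex"
    and n :: int
    and \<delta> :: real
    and G :: "nat \<Rightarrow> 'w \<Rightarrow> complex"
    and C :: "nat \<Rightarrow> nat \<Rightarrow> complex"
  assumes prob: "prob_space P"
    and L_pos: "L > 0"
    and a_pos: "a > 0" and a_dvd: "a dvd L"
    and b_pos: "b > 0" and b_dvd: "b dvd L"
    and K_pos: "Kg L b g > 0"
    and \<sigma>_pos: "\<sigma>\<^sub>0 > 0"
    and N_indep: "prob_space.indep_vars P (\<lambda>_. borel) N {..<L}"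
    and N_distr: "\<forall>t<L. distributed P lborel (N t) (normal_density 0 \<sigma>\<^sub>0)"
    and Z_gauss: "complex_gaussian_signal P L Z"
    and Z_mean: "\<forall>t<L. integral\<^sup>L P (Z t) = 0"
    and ZN_indep: "prob_space.indep_var P
         (PiM {..<L} (\<lambda>_. borel :: complex measure)) (\<lambda>\<omega>. restrict (\<lambda>t. Z t \<omega>) {..<L})
         (PiM {..<L} (\<lambda>_. borel :: complex measure))
           (\<lambda>\<omega>. restrict (\<lambda>t. complex_of_real (N t \<omega>)) {..<L})"
    and G_def: "\<forall>m \<omega>. G m \<omega> =
         (\<Sum>t<L. Z t \<omega> * cnj (per L g (int t - n * int a)) *
            exp (- 2 * \<i> * complex_of_real pi * (of_nat m - of_real \<delta>) *
                 of_int (int t - int a * n) / of_nat (L div b)))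
       + (\<Sum>t<L. complex_of_real (N t \<omega>) * cnj (per L g (int t - n * int a)) *
            exp (- 2 * \<i> * complex_of_real pi * of_nat m * of_nat b *
                 of_int (int t - n * int a) / of_nat L))"
    and C_def: "\<forall>m m'. C m m' = integral\<^sup>L P (\<lambda>\<omega>. G m \<omega> * cnj (G m' \<omega>))"
  shows "(\<forall>x :: nat \<Rightarrow> complex.
            Im (\<Sum>m<L div b. \<Sum>m'<L div b. cnj (x m) * C m m' * x m') = 0 \<and>
            Re (\<Sum>m<L div b. \<Sum>m'<L div b. cnj (x m) * C m m' * x m')
              \<ge> \<sigma>\<^sub>0\<^sup>2 * Kg L b g * (\<Sum>m<L div b. (cmod (x m))\<^sup>2))
       \<and> (\<exists>D :: nat \<Rightarrow> nat \<Rightarrow> complex.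
            (\<forall>i<L div b. \<forall>j<L div b.
               (\<Sum>k<L div b. C i k * D k j) = (if i = j then 1 else 0)) \<and>
            (\<forall>i<L div b. \<forall>j<L div b.
               (\<Sum>k<L div b. D i k * C k j) = (if i = j then 1 else 0)))"
proof -
  define M where "M = L div b"
  have LbM: "L = b * M" unfolding M_def using b_dvd by simp
  have M_pos: "M > 0" using LbM L_pos by (cases M) auto
  have Z_L2: "\<forall>t<L. L2c P (Z t)"
  proof (intro allI impI)
    fix t assume t: "t < L"
    have meas: "\<forall>c d :: nat \<Rightarrow> real. real_gaussian_rv P (\<lambda>\<omega>. \<Sum>t<L. c t * Re (Z t \<omega>) + d t * Im (Z t \<omega>))"
      using Z_gauss unfolding complex_gaussian_signal_def by blast
    have dl: "\<And>t' X. (if t' = t then 1 else 0) * X = (if t' = t then X else (0::real))" by simp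
    have e1: "(\<lambda>\<omega>. \<Sum>t'<L. (if t' = t then 1 else 0) * Re (Z t' \<omega>) + 0 * Im (Z t' \<omega>)) = (\<lambda>\<omega>. Re (Z t \<omega>))"
      using t by (intro ext) (simp only: dl mult_zero_left add_0_right add_0_left sum.delta', simp)
    have e2: "(\<lambda>\<omega>. \<Sum>t'<L. 0 * Re (Z t' \<omega>) + (if t' = t then 1 else 0) * Im (Z t' \<omega>)) = (\<lambda>\<omega>. Im (Z t \<omega>))"
      using t by (intro ext) (simp only: dl mult_zero_left add_0_right add_0_left sum.delta', simp)
    have "real_gaussian_rv P (\<lambda>\<omega>. Re (Z t \<omega>))"
      using meas[rule_format, of "\<lambda>t'. if t' = t then 1 else 0" "\<lambda>_. 0"] unfolding e1 .
    moreover have "real_gaussian_rv P (\<lambda>\<omega>. Im (Z t \<omega>))"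
      using meas[rule_format, of "\<lambda>_. 0" "\<lambda>t'. if t' = t then 1 else 0"] unfolding e2 .
    ultimately show "L2c P (Z t)" unfolding L2c_def using gauss_L2r[OF prob] by blast
  qed
  have N_L2c: "L2c P (\<lambda>\<omega>. complex_of_real (N t \<omega>))" if "t < L" for t
    using L2c_of_real[OF prob N_L2[OF prob \<sigma>_pos N_indep N_distr that]] .
  define A where "A m t = cnj (per L g (int t - n * int a)) *
            exp (- 2 * \<i> * complex_of_real pi * (of_nat m - of_real \<delta>) *
                 of_int (int t - int a * n) / of_nat (L div b))" for m t
  define B where "B m t = cnj (per L g (int t - n * int a)) *
            exp (- 2 * \<i> * complex_of_real pi * of_nat m * of_nat b *
                 of_int (int t - n * int a) / of_nat L)" for m t
  have G': "G m \<omega> = (\<Sum>t<L. Z t \<omega> * A m t) + (\<Sum>t<L. complex_of_real (N t \<omega>) * B m t)" for m \<omega>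
    using G_def unfolding A_def B_def by (simp only: mult.assoc)
  have G_L2: "L2c P (G m)" for m
  proof -
    have "L2c P (\<lambda>\<omega>. (\<Sum>t<L. Z t \<omega> * A m t) + (\<Sum>t<L. complex_of_real (N t \<omega>) * B m t))"
      using Z_L2 N_L2c by (intro L2c_add L2c_sum[OF _ prob] L2c_cmult') auto
    moreover have "G m = (\<lambda>\<omega>. (\<Sum>t<L. Z t \<omega> * A m t) + (\<Sum>t<L. complex_of_real (N t \<omega>) * B m t))"
      by (rule ext, rule G')
    ultimately show ?thesis by simp
  qed
  have Gint: "integrable P (\<lambda>\<omega>. G m \<omega> * cnj (G m' \<omega>))" for m m'
    by (rule L2c_mult_cnj[OF G_L2 G_L2])
  have quad: "Im (\<Sum>m<M. \<Sum>m'<M. cnj (x m) * C m m' * x m') = 0 \<and>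
      Re (\<Sum>m<M. \<Sum>m'<M. cnj (x m) * C m m' * x m') \<ge> \<sigma>\<^sub>0\<^sup>2 * Kg L b g * (\<Sum>m<M. (cmod (x m))\<^sup>2)" for x
  proof -
    define Y where "Y \<omega> = (\<Sum>m<M. cnj (x m) * G m \<omega>)" for \<omega>
    have "(\<Sum>m<M. \<Sum>m'<M. cnj (x m) * C m m' * x m')
        = (\<Sum>m<M. \<Sum>m'<M. integral\<^sup>L P (\<lambda>\<omega>. cnj (x m) * (G m \<omega> * cnj (G m' \<omega>)) * x m'))"
      using C_def by simp
    also have "\<dots> = (\<Sum>m<M. integral\<^sup>L P (\<lambda>\<omega>. \<Sum>m'<M. cnj (x m) * (G m \<omega> * cnj (G m' \<omega>)) * x m'))"
      using Gint
      by (intro sum.cong refl Bochner_Integration.integral_sum[symmetric] integrable_mult_left integrable_mult_right) auto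
    also have "\<dots> = integral\<^sup>L P (\<lambda>\<omega>. \<Sum>m<M. \<Sum>m'<M. cnj (x m) * (G m \<omega> * cnj (G m' \<omega>)) * x m')"
      using Gint
      by (intro Bochner_Integration.integral_sum[symmetric] Bochner_Integration.integrable_sum integrable_mult_left integrable_mult_right) auto
    also have "\<dots> = integral\<^sup>L P (\<lambda>\<omega>. Y \<omega> * cnj (Y \<omega>))"
    proof -
      have "Y \<omega> * cnj (Y \<omega>) = (\<Sum>m<M. \<Sum>m'<M. cnj (x m) * (G m \<omega> * cnj (G m' \<omega>)) * x m')" for \<omega>
      proof -
        have c: "cnj (Y \<omega>) = (\<Sum>m'<M. x m' * cnj (G m' \<omega>))"
          unfolding Y_def by (simp only: cnj_sum complex_cnj_mult complex_cnj_cnj)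
        show ?thesis unfolding c unfolding Y_def sum_product
          by (intro sum.cong refl) (simp add: mult_ac)
      qed
      then show ?thesis by simp
    qed
    finally have QY: "(\<Sum>m<M. \<Sum>m'<M. cnj (x m) * C m m' * x m') = integral\<^sup>L P (\<lambda>\<omega>. Y \<omega> * cnj (Y \<omega>))" .
    define \<alpha> where "\<alpha> t = (\<Sum>m<M. cnj (x m) * A m t)" for t
    define \<beta> where "\<beta> t = (\<Sum>m<M. cnj (x m) * B m t)" for t
    have Yeq: "Y = (\<lambda>\<omega>. (\<Sum>t<L. \<alpha> t * Z t \<omega>) + (\<Sum>t<L. \<beta> t * complex_of_real (N t \<omega>)))"
      unfolding Y_def G' \<alpha>_def \<beta>_def by (rule ext, rule lin_rearr)
    have qm: "Im (integral\<^sup>L P (\<lambda>\<omega>. Y \<omega> * cnj (Y \<omega>))) = 0"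
      "Re (integral\<^sup>L P (\<lambda>\<omega>. Y \<omega> * cnj (Y \<omega>))) \<ge> \<sigma>\<^sub>0\<^sup>2 * (\<Sum>t<L. (cmod (\<beta> t))\<^sup>2)"
      unfolding Yeq using quad_main[OF prob \<sigma>_pos N_indep N_distr Z_L2 ZN_indep, where \<alpha>=\<alpha> and \<beta>=\<beta>] by auto
    have Bexp: "B m t = cnj (per L g (int t - n * int a)) * E M (- (int m * (int t - n * int a)))" for m t
    proof -
      have "- 2 * \<i> * complex_of_real pi * of_nat m * of_nat b * of_int (int t - n * int a) / of_nat L
          = 2 * of_real pi * \<i> * of_int (- (int m * (int t - n * int a))) / of_nat M"
        using M_pos b_pos unfolding LbM by (simp add: field_simps)
      then show ?thesis unfolding B_def E_def by simp
    qed
    have beta: "\<beta> t = cnj (per L g (int t - n * int a)) * Xf M x (int t - n * int a)" for t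
      unfolding \<beta>_def Xf_def Bexp by (simp add: sum_distrib_left mult_ac)
    have "(\<Sum>t<L. (cmod (\<beta> t))\<^sup>2)
        = (\<Sum>t<L. (cmod (per L g (int t - n * int a)))\<^sup>2 * (cmod (Xf M x (int t - n * int a)))\<^sup>2)"
      unfolding beta by (simp add: norm_mult power_mult_distrib)
    also have "\<dots> \<ge> Kg L b g * real M * (\<Sum>m<M. (cmod (x m))\<^sup>2)"
      by (rule main_bound[OF LbM b_pos M_pos])
    finally have bb: "(\<Sum>t<L. (cmod (\<beta> t))\<^sup>2) \<ge> Kg L b g * real M * (\<Sum>m<M. (cmod (x m))\<^sup>2)" .
    have S0: "0 \<le> (\<Sum>m<M. (cmod (x m))\<^sup>2)" by (intro sum_nonneg) auto
    have "Kg L b g * (\<Sum>m<M. (cmod (x m))\<^sup>2) \<le> Kg L b g * real M * (\<Sum>m<M. (cmod (x m))\<^sup>2)"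
    proof -
      have "1 \<le> real M" using M_pos by simp
      then have "Kg L b g * 1 \<le> Kg L b g * real M" using K_pos by (intro mult_left_mono) auto
      then show ?thesis using S0 by (intro mult_right_mono) auto
    qed
    also have "\<dots> \<le> (\<Sum>t<L. (cmod (\<beta> t))\<^sup>2)" using bb .
    finally have "\<sigma>\<^sub>0\<^sup>2 * (Kg L b g * (\<Sum>m<M. (cmod (x m))\<^sup>2)) \<le> \<sigma>\<^sub>0\<^sup>2 * (\<Sum>t<L. (cmod (\<beta> t))\<^sup>2)"
      by (intro mult_left_mono) auto
    then show ?thesis using qm unfolding QY by (simp add: mult.assoc)
  qed
  have inv: "\<exists>D :: nat \<Rightarrow> nat \<Rightarrow> complex.
            (\<forall>i<M. \<forall>j<M. (\<Sum>k<M. C i k * D k j) = (if i = j then 1 else 0)) \<and>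
            (\<forall>i<M. \<forall>j<M. (\<Sum>k<M. D i k * C k j) = (if i = j then 1 else 0))"
    by (rule inv_exists[where n=M and C=C and c="\<sigma>\<^sub>0\<^sup>2 * Kg L b g"]) (use quad K_pos \<sigma>_pos in auto)
  show ?thesis using quad inv unfolding M_def by blast
qed

end
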